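(* Let $\{(\mathbf{X}^t,Y^t)\}_{t\in\mathbb{N}}$ be a discrete-time stochastic process with $\mathbf{X}^t\in\mathbb{R}^d$, and let $h^t(\mathbf{x})=\langle \boldsymbol{\beta}^t,\mathbf{x}\rangle$ be a sequence of linear classifiers approximating $P(Y^t\mid\mathbf{X}^t)$, each trained on a dataset $\mathcal{D}^t\sim P(\mathbf{X}^t,Y^t)$. Assume $-k\le \beta^t_i\le k$ and $-k\le X^t_i\le k$ for all $i,t$, for some $k\in\mathbb{R}^+$. Given a realization $\mathbf{x}^t$ and an intervention $\boldsymbol{\theta}$ with $\mathbb{E}[h^t(\hat{\mathbf{x}}^t)]\ge 1/2$, the temporal invalidation rate satisfies, for every $\tau>0$, $$\Delta h(\boldsymbol{\theta};\tau)\le k\sqrt{d}\cdot\left(\mathbb{E}\left[\|\boldsymbol{\beta}^{t+\tau}-\boldsymbol{\beta}^t\|\right]+\mathbb{E}\left[\|\hat{\mathbf{x}}^{t+\tau}-\hat{\mathbf{x}}^t\|\right]\right),$$ where $\|\cdot\|$ is the $\ell_2$-norm and the expectation is over $\mathcal{D}^t\sim P(\mathbf{X}^t,Y^t)$ and the training process.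
   Context: The intervention is a soft intervention $do(\boldsymbol{\theta})=do(\mathbf{X}_{\mathcal{I}}=\mathbf{x}_{\mathcal{I}}+\boldsymbol{\theta})$ on a subset $\mathcal{I}$ of features; $nd(\mathcal{I})$ denotes the non-descendants of the intervened variables. $\hat{\mathbf{x}}^t\sim P^{do(\boldsymbol{\theta})}(\mathbf{X}^t\mid \mathbf{X}^t_{nd(\mathcal{I})}=\mathbf{x}^t_{nd(\mathcal{I})})$ and $\hat{\mathbf{x}}^{t+\tau}\sim P^{do(\boldsymbol{\theta})}(\mathbf{X}^{t+\tau}\mid \mathbf{X}^{t+\tau}_{nd(\mathcal{I})}=\mathbf{x}^{t+\tau}_{nd(\mathcal{I})})$ (interventional distributions). The temporal invalidation rate after lag $\tau>0$ is $\Delta h(\boldsymbol{\theta};\tau)=\mathbb{E}\left[\left|h^{t+\tau}(\hat{\mathbf{x}}^{t+\tau})-h^t(\hat{\mathbf{x}}^t)\right|\right]$. *)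

theory Defs
  imports "HOL-Probability.Probability"
begin

definition lin_clf :: "real^'d \<Rightarrow> real^'d \<Rightarrow> real" where
  "lin_clf beta x = beta \<bullet> x"

text \<open>Temporal invalidation rate Delta h(theta; tau) = E |h^{t+tau}(xhat^{t+tau}) - h^t(xhat^t)|,
  where beta s is the (random) parameter of the classifier at time s and xhat s the (random)
  interventional sample at time s, all on a common probability space M.\<close>
definition temporal_invalidation_rate ::
  "'a measure \<Rightarrow> (nat \<Rightarrow> 'a \<Rightarrow> real^'d) \<Rightarrow> (nat \<Rightarrow> 'a \<Rightarrow> real^'d) \<Rightarrow> nat \<Rightarrow> nat \<Rightarrow> real" where
  "temporal_invalidation_rate M beta xhat t \<tau> =
     (\<integral>\<omega>. \<bar>lin_clf (beta (t + \<tau>) \<omega>) (xhat (t + \<tau>) \<omega>) - lin_clf (beta t \<omega>) (xhat t \<omega>)\<bar> \<partial>M)"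

end

theory Submission
  imports Defs
begin

lemma vec_norm_bound:
  fixes x :: "real^'d"
  assumes "\<And>i. - k \<le> x $ i \<and> x $ i \<le> k"
  shows "norm x \<le> k * sqrt (real CARD('d))"
proof -
  have k0: "0 \<le> k" using assms[of undefined] by linarith
  have "\<bar>x $ i\<bar> \<le> k" for i using assms[of i] by linarith
  then have "infnorm x \<le> k"
    unfolding infnorm_Max
    by (subst Max_le_iff) (auto simp: Basis_vec_def cart_eq_inner_axis[symmetric])
  moreover have "norm x \<le> sqrt (real DIM(real^'d)) * infnorm x" by (rule norm_le_infnorm)
  ultimately have "norm x \<le> sqrt (real DIM(real^'d)) * k"
    by (meson order_trans mult_left_mono real_sqrt_ge_zero of_nat_0_le_iff)
  then show ?thesis by (simp add: mult.commute)
qed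

theorem theorem1:
  fixes M :: "'a measure"
    and beta xhat :: "nat \<Rightarrow> 'a \<Rightarrow> real^'d"
    and k :: real and t \<tau> :: nat
  assumes "prob_space M"
    and "k > 0"
    and "\<And>s. beta s \<in> borel_measurable M"
    and "\<And>s. xhat s \<in> borel_measurable M"
    and "\<And>s \<omega> i. \<omega> \<in> space M \<Longrightarrow> - k \<le> beta s \<omega> $ i \<and> beta s \<omega> $ i \<le> k"
    and "\<And>s \<omega> i. \<omega> \<in> space M \<Longrightarrow> - k \<le> xhat s \<omega> $ i \<and> xhat s \<omega> $ i \<le> k"
    and "(\<integral>\<omega>. lin_clf (beta t \<omega>) (xhat t \<omega>) \<partial>M) \<ge> 1/2"
    and "\<tau> > 0"
  shows "temporal_invalidation_rate M beta xhat t \<tau>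
           \<le> k * sqrt (real CARD('d)) *
              ((\<integral>\<omega>. norm (beta (t + \<tau>) \<omega> - beta t \<omega>) \<partial>M)
               + (\<integral>\<omega>. norm (xhat (t + \<tau>) \<omega> - xhat t \<omega>) \<partial>M))"
proof -
  interpret prob_space M by fact
  define C where "C = k * sqrt (real CARD('d))"
  have C0: "0 \<le> C" using assms(2) by (simp add: C_def)
  have nb: "norm (beta s \<omega>) \<le> C" if "\<omega> \<in> space M" for s \<omega>
    unfolding C_def by (rule vec_norm_bound) (use assms(5) that in auto)
  have nx: "norm (xhat s \<omega>) \<le> C" if "\<omega> \<in> space M" for s \<omega>
    unfolding C_def by (rule vec_norm_bound) (use assms(6) that in auto)
  let ?b1 = "beta (t + \<tau>)" and ?b0 = "beta t" and ?x1 = "xhat (t + \<tau>)" and ?x0 = "xhat t"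
  have pw: "\<bar>lin_clf (?b1 \<omega>) (?x1 \<omega>) - lin_clf (?b0 \<omega>) (?x0 \<omega>)\<bar>
        \<le> C * (norm (?b1 \<omega> - ?b0 \<omega>) + norm (?x1 \<omega> - ?x0 \<omega>))" if w: "\<omega> \<in> space M" for \<omega>
  proof -
    have eq: "?b1 \<omega> \<bullet> ?x1 \<omega> - ?b0 \<omega> \<bullet> ?x0 \<omega>
        = (?b1 \<omega> - ?b0 \<omega>) \<bullet> ?x1 \<omega> + ?b0 \<omega> \<bullet> (?x1 \<omega> - ?x0 \<omega>)"
      by (simp add: inner_diff_left inner_diff_right)
    have "\<bar>(?b1 \<omega> - ?b0 \<omega>) \<bullet> ?x1 \<omega>\<bar> \<le> norm (?b1 \<omega> - ?b0 \<omega>) * norm (?x1 \<omega>)"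
      by (rule Cauchy_Schwarz_ineq2)
    also have "\<dots> \<le> norm (?b1 \<omega> - ?b0 \<omega>) * C" by (rule mult_left_mono[OF nx[OF w]]) simp
    finally have a: "\<bar>(?b1 \<omega> - ?b0 \<omega>) \<bullet> ?x1 \<omega>\<bar> \<le> norm (?b1 \<omega> - ?b0 \<omega>) * C" .
    have "\<bar>?b0 \<omega> \<bullet> (?x1 \<omega> - ?x0 \<omega>)\<bar> \<le> norm (?b0 \<omega>) * norm (?x1 \<omega> - ?x0 \<omega>)"
      by (rule Cauchy_Schwarz_ineq2)
    also have "\<dots> \<le> C * norm (?x1 \<omega> - ?x0 \<omega>)" by (rule mult_right_mono[OF nb[OF w]]) simp
    finally have b: "\<bar>?b0 \<omega> \<bullet> (?x1 \<omega> - ?x0 \<omega>)\<bar> \<le> C * norm (?x1 \<omega> - ?x0 \<omega>)" .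
    show ?thesis unfolding lin_clf_def eq using a b by (simp add: algebra_simps)
  qed
  have mb: "\<And>s. beta s \<in> borel_measurable M" "\<And>s. xhat s \<in> borel_measurable M" using assms(3,4) by auto
  have int1: "integrable M (\<lambda>\<omega>. norm (?b1 \<omega> - ?b0 \<omega>))"
  proof (rule integrable_const_bound[where B="2*C"])
    show "AE \<omega> in M. norm (norm (?b1 \<omega> - ?b0 \<omega>)) \<le> 2*C"
    proof (rule AE_I2)
      fix \<omega> assume w: "\<omega> \<in> space M"
      have "norm (?b1 \<omega> - ?b0 \<omega>) \<le> norm (?b1 \<omega>) + norm (?b0 \<omega>)" by (rule norm_triangle_ineq4)
      then show "norm (norm (?b1 \<omega> - ?b0 \<omega>)) \<le> 2*C" using nb[OF w, of "t+\<tau>"] nb[OF w, of t] by simp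
    qed
    show "(\<lambda>\<omega>. norm (?b1 \<omega> - ?b0 \<omega>)) \<in> borel_measurable M"
      by (rule measurable_compose[OF borel_measurable_diff[OF mb(1) mb(1)] borel_measurable_norm])
  qed
  have int2: "integrable M (\<lambda>\<omega>. norm (?x1 \<omega> - ?x0 \<omega>))"
  proof (rule integrable_const_bound[where B="2*C"])
    show "AE \<omega> in M. norm (norm (?x1 \<omega> - ?x0 \<omega>)) \<le> 2*C"
    proof (rule AE_I2)
      fix \<omega> assume w: "\<omega> \<in> space M"
      have "norm (?x1 \<omega> - ?x0 \<omega>) \<le> norm (?x1 \<omega>) + norm (?x0 \<omega>)" by (rule norm_triangle_ineq4)
      then show "norm (norm (?x1 \<omega> - ?x0 \<omega>)) \<le> 2*C" using nx[OF w, of "t+\<tau>"] nx[OF w, of t] by simp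
    qed
    show "(\<lambda>\<omega>. norm (?x1 \<omega> - ?x0 \<omega>)) \<in> borel_measurable M"
      by (rule measurable_compose[OF borel_measurable_diff[OF mb(2) mb(2)] borel_measurable_norm])
  qed
  have int3: "integrable M (\<lambda>\<omega>. C * (norm (?b1 \<omega> - ?b0 \<omega>) + norm (?x1 \<omega> - ?x0 \<omega>)))"
    using int1 int2 by auto
  have "temporal_invalidation_rate M beta xhat t \<tau>
        \<le> (\<integral>\<omega>. C * (norm (?b1 \<omega> - ?b0 \<omega>) + norm (?x1 \<omega> - ?x0 \<omega>)) \<partial>M)"
    unfolding temporal_invalidation_rate_def
    by (rule integral_mono'[OF int3]) (use pw C0 in auto)
  also have "\<dots> = C * ((\<integral>\<omega>. norm (?b1 \<omega> - ?b0 \<omega>) \<partial>M) + (\<integral>\<omega>. norm (?x1 \<omega> - ?x0 \<omega>) \<partial>M))"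
    using int1 int2 by (simp add: algebra_simps)
  finally show ?thesis unfolding C_def .
qed

end
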